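(* Let $\beta:=\frac{1}{2\pi}\int_{-\infty}^{\infty}\prod_{k=1}^\infty\frac{k^{2\alpha}}{k^{2\alpha}+t^2}\,dt$, which is a finite positive constant depending only on $\alpha$. Then as $i,j\to\infty$, \[ \Pr[BINGO(i,j)]\sim\beta\,\bigl(i^{-\alpha}+j^{-\alpha}\bigr). \] In particular $\Pr[BINGO(n,n)]\sim 2\beta n^{-\alpha}$ as $n\to\infty$.
   Context: Fix $\alpha>1$. Let $(X_k,Y_k)_{k\ge2}$ be the Markov chain on $\mathbb N\times\mathbb N$ with $(X_2,Y_2)=(1,1)$ and, from state $(i,j)$, moving to $(i+1,j)$ with probability $i^\alpha/(i^\alpha+j^\alpha)$ and to $(i,j+1)$ with probability $j^\alpha/(i^\alpha+j^\alpha)$. $BINGO(i,j)$ is the event that the chain visits the state $(i,j)$. *)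

theory Defs
  imports "HOL-Probability.Probability" "HOL-Library.Landau_Symbols"
begin

definition urn_step :: "real \<Rightarrow> nat \<times> nat \<Rightarrow> (nat \<times> nat) pmf" where
  "urn_step \<alpha> s = (case s of (i, j) \<Rightarrow>
     map_pmf (\<lambda>b. if b then (i + 1, j) else (i, j + 1))
       (bernoulli_pmf (real i powr \<alpha> / (real i powr \<alpha> + real j powr \<alpha>))))"

text \<open>Distribution of the trajectory (X_2, ..., X_n) as a list of states (for n >= 2);
  the chain starts at (X_2, Y_2) = (1,1).\<close>
fun urn_paths :: "real \<Rightarrow> nat \<Rightarrow> (nat \<times> nat) list pmf" where
  "urn_paths \<alpha> 0 = return_pmf [(1, 1)]"
| "urn_paths \<alpha> (Suc 0) = return_pmf [(1, 1)]"
| "urn_paths \<alpha> (Suc (Suc 0)) = return_pmf [(1, 1)]"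
| "urn_paths \<alpha> (Suc (Suc (Suc n))) =
     bind_pmf (urn_paths \<alpha> (Suc (Suc n)))
       (\<lambda>xs. map_pmf (\<lambda>s. xs @ [s]) (urn_step \<alpha> (last xs)))"

text \<open>Pr[BINGO(i,j)]: probability that the chain ever visits (i,j), as the limit (supremum)
  of the probabilities of visiting (i,j) by time n.\<close>
definition bingo_prob :: "real \<Rightarrow> nat \<Rightarrow> nat \<Rightarrow> real" where
  "bingo_prob \<alpha> i j = (SUP n. measure_pmf.prob (urn_paths \<alpha> n) {xs. (i, j) \<in> set xs})"

definition bingo_beta :: "real \<Rightarrow> real" where
  "bingo_beta \<alpha> = 1 / (2 * pi) *
     (LINT t|lborel. (\<Prod>k. real (Suc k) powr (2 * \<alpha>) / (real (Suc k) powr (2 * \<alpha>) + t\<^sup>2)))"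

end

theory Submission
  imports Defs
begin


lemma inv1sq: "integrable lborel (\<lambda>x::real. 1 / (1 + x\<^sup>2))" "integral\<^sup>L lborel (\<lambda>x::real. 1 / (1 + x\<^sup>2)) = pi"
proof -
  have e: "einterval (-\<infinity>) \<infinity> = UNIV" by (auto simp: einterval_def)
  show "integrable lborel (\<lambda>x::real. 1 / (1 + x\<^sup>2))"
    using integrable_inverse_1_plus_square unfolding e set_integrable_def
    by (simp add: divide_inverse)
  show "integral\<^sup>L lborel (\<lambda>x::real. 1 / (1 + x\<^sup>2)) = pi"
    using LBINT_inverse_1_plus_square unfolding interval_lebesgue_integral_def e set_lebesgue_integral_def
    by (simp add: divide_inverse)
qed

lemma invsq:
  fixes a :: real assumes a: "a > 0"
  shows "integrable lborel (\<lambda>x::real. 1 / (a\<^sup>2 + x\<^sup>2))" "integral\<^sup>L lborel (\<lambda>x::real. 1 / (a\<^sup>2 + x\<^sup>2)) = pi / a"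
proof -
  have eq: "1 / (a\<^sup>2 + (0 + a * x)\<^sup>2) = (1/a\<^sup>2) * (1 / (1 + x\<^sup>2))" for x
    using a by (simp add: field_simps power_mult_distrib)
  have "integrable lborel (\<lambda>x. 1 / (a\<^sup>2 + (0 + a * x)\<^sup>2))"
    unfolding eq by (intro integrable_mult_right inv1sq)
  then show "integrable lborel (\<lambda>x::real. 1 / (a\<^sup>2 + x\<^sup>2))"
    using lborel_integrable_real_affine_iff[of a "\<lambda>x. 1 / (a\<^sup>2 + x\<^sup>2)" 0] a by simp
  have "integral\<^sup>L lborel (\<lambda>x::real. 1 / (a\<^sup>2 + x\<^sup>2)) = \<bar>a\<bar> *\<^sub>R integral\<^sup>L lborel (\<lambda>x. 1 / (a\<^sup>2 + (0 + a * x)\<^sup>2))"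
    using a by (intro lborel_integral_real_affine) simp
  also have "\<dots> = a * ((1/a\<^sup>2) * pi)" using a
    by (simp only: eq integral_mult_right_zero inv1sq(2)) simp
  also have "\<dots> = pi / a" using a by (simp add: power2_eq_square)
  finally show "integral\<^sup>L lborel (\<lambda>x::real. 1 / (a\<^sup>2 + x\<^sup>2)) = pi / a" .
qed

lemma odd_integral_zero:
  fixes g :: "real \<Rightarrow> real" assumes "\<And>x. g (-x) = - g x"
  shows "integral\<^sup>L lborel g = 0"
proof -
  have "integral\<^sup>L lborel g = \<bar>-1\<bar> *\<^sub>R integral\<^sup>L lborel (\<lambda>x. g (0 + (-1) * x))"
    by (intro lborel_integral_real_affine) simp
  also have "\<dots> = - integral\<^sup>L lborel g" using assms by simp
  finally show ?thesis by simp
qed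

definition ff :: "real \<Rightarrow> real \<Rightarrow> complex" where
  "ff a t = 1 / (complex_of_real a - \<i> * complex_of_real t)"

lemma norm_ff: "norm (ff a t) = 1 / sqrt (a\<^sup>2 + t\<^sup>2)"
proof -
  have "cmod (complex_of_real a - \<i> * complex_of_real t) = sqrt (a\<^sup>2 + t\<^sup>2)"
    by (simp add: cmod_def)
  then show ?thesis unfolding ff_def by (simp add: norm_divide)
qed

lemma norm_ff_le1: "a \<ge> 1 \<Longrightarrow> norm (ff a t) \<le> 1"
proof -
  assume "a \<ge> 1"
  then have "1 \<le> sqrt (a\<^sup>2 + t\<^sup>2)"
    by (metis add_increasing2 le_add_same_cancel1 one_le_power real_sqrt_ge_one zero_le_power2)
  then show ?thesis unfolding norm_ff by simp
qed

lemma norm_ff2: "a \<ge> 1 \<Longrightarrow> b \<ge> 1 \<Longrightarrow> norm (ff a t) * norm (ff b t) \<le> 1 / (1 + t\<^sup>2)"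
proof -
  assume a: "a \<ge> 1" and b: "b \<ge> 1"
  have sa: "sqrt (1 + t\<^sup>2) \<le> sqrt (a\<^sup>2 + t\<^sup>2)" using a by (simp add: one_le_power)
  have sb: "sqrt (1 + t\<^sup>2) \<le> sqrt (b\<^sup>2 + t\<^sup>2)" using b by (simp add: one_le_power)
  have "1 + t\<^sup>2 = sqrt (1 + t\<^sup>2) * sqrt (1 + t\<^sup>2)"
    by (simp add: add_nonneg_nonneg)
  also have "\<dots> \<le> sqrt (a\<^sup>2 + t\<^sup>2) * sqrt (b\<^sup>2 + t\<^sup>2)"
    using sa sb by (intro mult_mono) auto
  finally have le: "1 + t\<^sup>2 \<le> sqrt (a\<^sup>2 + t\<^sup>2) * sqrt (b\<^sup>2 + t\<^sup>2)" .
  have pos: "0 < 1 + t\<^sup>2" by (simp add: add_pos_nonneg)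
  show ?thesis unfolding norm_ff using le pos
    by (simp add: divide_simps)
qed

lemma Re_ff: "Re (ff a t) = a / (a\<^sup>2 + t\<^sup>2)" and Im_ff: "Im (ff a t) = t / (a\<^sup>2 + t\<^sup>2)"
  by (simp_all add: ff_def Re_divide Im_divide power2_eq_square)

lemma ff_meas[measurable]: "(\<lambda>t. ff a t) \<in> borel_measurable borel"
  unfolding ff_def by measurable

lemma prod_ff_meas[measurable]: "(\<lambda>t. \<Prod>k\<in>S. ff (c k) t) \<in> borel_measurable borel"
  by (rule borel_measurable_prod) simp

lemma prod_ff_bound:
  assumes "finite S" "2 \<le> card S" "\<forall>k\<in>S. 1 \<le> c k"
  shows "norm (\<Prod>k\<in>S. ff (c k) t) \<le> 1 / (1 + t\<^sup>2)"
proof -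
  obtain a b where ab: "a \<in> S" "b \<in> S" "a \<noteq> b"
    using assms(1,2) card_le_Suc0_iff_eq[of S] by force
  have "(\<Prod>k\<in>S. ff (c k) t) = ff (c a) t * (\<Prod>k\<in>S-{a}. ff (c k) t)"
    using ab assms(1) by (simp add: prod.remove)
  also have "(\<Prod>k\<in>S-{a}. ff (c k) t) = ff (c b) t * (\<Prod>k\<in>S-{a}-{b}. ff (c k) t)"
    using ab assms(1) by (intro prod.remove) auto
  finally have eq: "norm (\<Prod>k\<in>S. ff (c k) t) = norm (ff (c a) t) * norm (ff (c b) t) * (\<Prod>k\<in>S-{a}-{b}. norm (ff (c k) t))"
    by (simp add: norm_mult prod_norm)
  have "(\<Prod>k\<in>S-{a}-{b}. norm (ff (c k) t)) \<le> 1"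
    using assms(3) by (intro prod_le_1) (auto intro: norm_ff_le1)
  then have "norm (\<Prod>k\<in>S. ff (c k) t) \<le> norm (ff (c a) t) * norm (ff (c b) t)"
    unfolding eq by (intro mult_left_le) auto
  also have "\<dots> \<le> 1 / (1 + t\<^sup>2)" using assms(3) ab by (intro norm_ff2) auto
  finally show ?thesis .
qed

lemma prod_ff_integrable:
  assumes "finite S" "2 \<le> card S" "\<forall>k\<in>S. 1 \<le> c k"
  shows "integrable lborel (\<lambda>t. \<Prod>k\<in>S. ff (c k) t)"
proof (rule Bochner_Integration.integrable_bound[OF inv1sq(1)])
  show "AE x in lborel. norm (\<Prod>k\<in>S. ff (c k) x) \<le> norm (1 / (1 + x\<^sup>2))"
    using prod_ff_bound[OF assms] by (auto simp: add_pos_nonneg)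
qed measurable

lemma ff2_zero:
  assumes a: "a \<ge> 1" and b: "b \<ge> 1" and ab: "a \<noteq> b"
  shows "(LINT t|lborel. ff a t * ff b t) = 0"
proof -
  have int: "integrable lborel (\<lambda>t. ff a t * ff b t)"
    using prod_ff_integrable[of "{0::nat,1}" "\<lambda>k. if k = 0 then a else b"] a b by simp
  have re: "Re (ff a t * ff b t) = (1/(b-a)) * (a * (1 / (a\<^sup>2 + t\<^sup>2)) - b * (1 / (b\<^sup>2 + t\<^sup>2)))" for t
  proof -
    have p1: "a\<^sup>2 + t\<^sup>2 > 0" "b\<^sup>2 + t\<^sup>2 > 0" using a b by (auto intro: add_pos_nonneg)
    have "Re (ff a t * ff b t) = Re (ff a t) * Re (ff b t) - Im (ff a t) * Im (ff b t)" by simp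
    also have "\<dots> = (a * b - t\<^sup>2) / ((a\<^sup>2 + t\<^sup>2) * (b\<^sup>2 + t\<^sup>2))"
      unfolding Re_ff Im_ff using p1 by (simp add: times_divide_times_eq diff_divide_distrib power2_eq_square)
    also have "\<dots> = (1/(b-a)) * (a * (1 / (a\<^sup>2 + t\<^sup>2)) - b * (1 / (b\<^sup>2 + t\<^sup>2)))"
    proof -
      have "a * (1 / (a\<^sup>2 + t\<^sup>2)) - b * (1 / (b\<^sup>2 + t\<^sup>2)) = (a * (b\<^sup>2 + t\<^sup>2) - b * (a\<^sup>2 + t\<^sup>2)) / ((a\<^sup>2 + t\<^sup>2) * (b\<^sup>2 + t\<^sup>2))"
        using p1 unfolding times_divide_eq_right mult_1_right by (subst diff_frac_eq) (auto simp: mult.commute)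
      also have "a * (b\<^sup>2 + t\<^sup>2) - b * (a\<^sup>2 + t\<^sup>2) = (b - a) * (a * b - t\<^sup>2)"
        by (simp add: algebra_simps power2_eq_square)
      finally show ?thesis using ab by simp
    qed
    finally show ?thesis .
  qed
  have "(LINT t|lborel. Re (ff a t * ff b t)) = Re (LINT t|lborel. ff a t * ff b t)"
    by (rule integral_bounded_linear[OF bounded_linear_Re int])
  moreover have "(LINT t|lborel. Im (ff a t * ff b t)) = Im (LINT t|lborel. ff a t * ff b t)"
    by (rule integral_bounded_linear[OF bounded_linear_Im int])
  moreover have "(LINT t|lborel. Im (ff a t * ff b t)) = 0"
    by (rule odd_integral_zero) (simp add: Re_ff Im_ff)
  moreover have "(LINT t|lborel. Re (ff a t * ff b t)) = 0"
  proof -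
    have ia: "integrable lborel (\<lambda>t. a * (1 / (a\<^sup>2 + t\<^sup>2)))" using a by (intro integrable_mult_right invsq) auto
    have ib: "integrable lborel (\<lambda>t. b * (1 / (b\<^sup>2 + t\<^sup>2)))" using b by (intro integrable_mult_right invsq) auto
    have "(LINT t|lborel. Re (ff a t * ff b t)) = (1/(b-a)) * ((LINT t|lborel. a * (1 / (a\<^sup>2 + t\<^sup>2))) - (LINT t|lborel. b * (1 / (b\<^sup>2 + t\<^sup>2))))"
      unfolding re using ia ib by simp
    also have "\<dots> = 0"
    proof -
      have "a > 0" "b > 0" using a b by auto
      then have "(LINT t|lborel. a * (1 / (a\<^sup>2 + t\<^sup>2))) = a * (pi / a)"
        "(LINT t|lborel. b * (1 / (b\<^sup>2 + t\<^sup>2))) = b * (pi / b)"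
        by (simp_all only: integral_mult_right_zero invsq(2))
      then show ?thesis using \<open>a > 0\<close> \<open>b > 0\<close> by simp
    qed
    finally show ?thesis .
  qed
  ultimately show ?thesis by (simp add: complex_eq_iff)
qed

lemma pf_aux:
  fixes x y :: complex assumes "x \<noteq> 0" "y \<noteq> 0" "y - x \<noteq> 0"
  shows "1 / x * (1 / y) = 1 / (y - x) * (1 / x - 1 / y)"
  using assms by (simp add: field_simps)

lemma pf_aux2:
  fixes p k u v R :: complex assumes "p = k * (u - v)"
  shows "p * R = k * (u * R - v * R)"
  using assms by (simp add: right_diff_distrib left_diff_distrib mult.assoc)

lemma prod_ff_zero:
  assumes "finite S" "2 \<le> card S" "inj_on c S" "\<forall>k\<in>S. 1 \<le> c k"
  shows "(LINT t|lborel. (\<Prod>k\<in>S. ff (c k) t)) = 0"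
  using assms
proof (induction "card S" arbitrary: S rule: less_induct)
  case less
  obtain a b where ab: "a \<in> S" "b \<in> S" "a \<noteq> b"
    using less(2,3) card_le_Suc0_iff_eq[of S] by force
  have cab: "c a \<noteq> c b" using less(4) ab by (meson inj_onD)
  show ?case
  proof (cases "card S = 2")
    case True
    have "card {a, b} = card S" using True ab by simp
    then have S: "S = {a, b}" using ab less(2) card_subset_eq[of S "{a,b}"] by auto
    then show ?thesis using ab cab less(5) ff2_zero[of "c a" "c b"] by simp
  next
    case False
    then have c3: "card S \<ge> 3" using less(3) by linarith
    have ca: "card (S - {a}) = card S - 1" "card (S - {b}) = card S - 1" using ab less(2) by auto
    have id: "(\<Prod>k\<in>S. ff (c k) t) = (1 / (of_real (c b) - of_real (c a))) *
       ((\<Prod>k\<in>S-{b}. ff (c k) t) - (\<Prod>k\<in>S-{a}. ff (c k) t))" for t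
    proof -
      have fS: "finite S" using less(2) by simp
      have r1: "(\<Prod>k\<in>S. ff (c k) t) = ff (c a) t * (\<Prod>k\<in>S-{a}. ff (c k) t)"
        by (rule prod.remove[OF fS ab(1)])
      have r2: "(\<Prod>k\<in>S-{a}. ff (c k) t) = ff (c b) t * (\<Prod>k\<in>S-{a}-{b}. ff (c k) t)"
        by (rule prod.remove) (use fS ab in auto)
      have r3: "(\<Prod>k\<in>S-{b}. ff (c k) t) = ff (c a) t * (\<Prod>k\<in>S-{b}-{a}. ff (c k) t)"
        by (rule prod.remove) (use fS ab in auto)
      have sw: "S-{b}-{a} = S-{a}-{b}" by auto
      have e1: "(\<Prod>k\<in>S. ff (c k) t) = ff (c a) t * ff (c b) t * (\<Prod>k\<in>S-{a}-{b}. ff (c k) t)"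
        unfolding r1 r2 by (simp only: mult.assoc)
      have e2: "(\<Prod>k\<in>S-{b}. ff (c k) t) = ff (c a) t * (\<Prod>k\<in>S-{a}-{b}. ff (c k) t)"
        unfolding r3 sw ..
      note e3 = r2
      have nz: "complex_of_real (c a) - \<i> * complex_of_real t \<noteq> 0" "complex_of_real (c b) - \<i> * complex_of_real t \<noteq> 0"
        using less(5) ab by (auto simp: complex_eq_iff)
      have nz2: "complex_of_real (c b) - complex_of_real (c a) \<noteq> 0" using cab by simp
      have "ff (c a) t * ff (c b) t = (1 / (of_real (c b) - of_real (c a))) * (ff (c a) t - ff (c b) t)"
        using pf_aux[OF nz] nz2 unfolding ff_def by simp
      then show ?thesis unfolding e1 e2 e3 by (rule pf_aux2)
    qed
    have i1: "integrable lborel (\<lambda>t. \<Prod>k\<in>S-{b}. ff (c k) t)"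
      using less ca c3 by (intro prod_ff_integrable) auto
    have i2: "integrable lborel (\<lambda>t. \<Prod>k\<in>S-{a}. ff (c k) t)"
      using less ca c3 by (intro prod_ff_integrable) auto
    have z1: "(LINT t|lborel. (\<Prod>k\<in>S-{b}. ff (c k) t)) = 0"
      using less ca c3 ab by (intro less(1)) (auto intro: inj_on_subset)
    have z2: "(LINT t|lborel. (\<Prod>k\<in>S-{a}. ff (c k) t)) = 0"
      using less ca c3 ab by (intro less(1)) (auto intro: inj_on_subset)
    show ?thesis unfolding id using i1 i2 z1 z2 by simp
  qed
qed



definition cc :: "real \<Rightarrow> nat \<Rightarrow> real" where
  "cc \<alpha> k = real (Suc k) powr \<alpha>"

definition gg :: "real \<Rightarrow> real \<Rightarrow> complex" where
  "gg a t = 1 / (complex_of_real a + \<i> * complex_of_real t)"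

definition Pm :: "real \<Rightarrow> nat \<Rightarrow> real \<Rightarrow> complex" where
  "Pm \<alpha> m t = (\<Prod>k<m. complex_of_real (cc \<alpha> k) * ff (cc \<alpha> k) t)"

definition Pc :: "real \<Rightarrow> nat \<Rightarrow> real \<Rightarrow> complex" where
  "Pc \<alpha> m t = (\<Prod>k<m. complex_of_real (cc \<alpha> k) * gg (cc \<alpha> k) t)"

definition HH :: "real \<Rightarrow> nat \<Rightarrow> nat \<Rightarrow> real \<Rightarrow> complex" where
  "HH \<alpha> u v t = Pm \<alpha> u t * Pc \<alpha> v t * (ff (cc \<alpha> u) t + gg (cc \<alpha> v) t)"

definition rr :: "real \<Rightarrow> nat \<Rightarrow> nat \<Rightarrow> real" where
  "rr \<alpha> u v = cc \<alpha> u / (cc \<alpha> u + cc \<alpha> v)"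

fun QQ :: "real \<Rightarrow> nat \<Rightarrow> nat \<Rightarrow> real" where
  "QQ \<alpha> 0 0 = 1"
| "QQ \<alpha> (Suc u) 0 = QQ \<alpha> u 0 * rr \<alpha> u 0"
| "QQ \<alpha> 0 (Suc v) = QQ \<alpha> 0 v * (1 - rr \<alpha> 0 v)"
| "QQ \<alpha> (Suc u) (Suc v) = QQ \<alpha> u (Suc v) * rr \<alpha> u (Suc v) + QQ \<alpha> (Suc u) v * (1 - rr \<alpha> (Suc u) v)"

lemma cc_ge1: "\<alpha> > 0 \<Longrightarrow> cc \<alpha> k \<ge> 1"
  unfolding cc_def by (simp add: ge_one_powr_ge_zero)

lemma cc0: "cc \<alpha> 0 = 1" unfolding cc_def by simp


lemma cc_inj: "\<alpha> > 0 \<Longrightarrow> inj (cc \<alpha>)"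
proof (rule injI)
  fix x y assume a: "\<alpha> > 0" and e: "cc \<alpha> x = cc \<alpha> y"
  show "x = y"
  proof (rule ccontr)
    assume "x \<noteq> y"
    then consider "x < y" | "y < x" by linarith
    then show False using e a unfolding cc_def
      by cases (auto dest: powr_less_mono2[of \<alpha> "real (Suc x)" "real (Suc y)"] powr_less_mono2[of \<alpha> "real (Suc y)" "real (Suc x)"])
  qed
qed

lemma gg_cnj: "gg a t = cnj (ff a t)"
  unfolding gg_def ff_def by (simp add: complex_cnj_divide)

lemma norm_gg: "norm (gg a t) = norm (ff a t)"
  unfolding gg_cnj by simp

lemma Pc_cnj: "Pc \<alpha> m t = cnj (Pm \<alpha> m t)"
  unfolding Pc_def Pm_def gg_cnj by (simp add: cnj_prod)

lemma ff_nz: "a \<ge> 1 \<Longrightarrow> complex_of_real a - \<i> * complex_of_real t \<noteq> 0"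
  by (auto simp: complex_eq_iff)
lemma gg_nz: "a \<ge> 1 \<Longrightarrow> complex_of_real a + \<i> * complex_of_real t \<noteq> 0"
  by (auto simp: complex_eq_iff)

lemma ff_gg_sum:
  assumes "a \<ge> 1" "b \<ge> 1"
  shows "ff a t + gg b t = complex_of_real (a + b) * ff a t * gg b t"
  using ff_nz[OF assms(1), of t] gg_nz[OF assms(2), of t] unfolding ff_def gg_def
  by (simp add: field_simps)

lemma norm_cff_le1: "a \<ge> 1 \<Longrightarrow> norm (complex_of_real a * ff a t) \<le> 1"
proof -
  assume a: "a \<ge> 1"
  have "a \<le> sqrt (a\<^sup>2 + t\<^sup>2)" using a by (simp add: real_le_rsqrt)
  moreover have "\<not> a\<^sup>2 + t\<^sup>2 < 0" by (simp add: not_less)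
  ultimately show ?thesis using a unfolding norm_mult norm_ff by (simp add: divide_simps)
qed

lemma norm_Pm_le1: "\<alpha> > 0 \<Longrightarrow> norm (Pm \<alpha> m t) \<le> 1"
  unfolding Pm_def prod_norm[symmetric] by (intro prod_le_1) (auto intro: norm_cff_le1 cc_ge1)

lemma norm_Pc_le1: "\<alpha> > 0 \<Longrightarrow> norm (Pc \<alpha> m t) \<le> 1"
  unfolding Pc_cnj using norm_Pm_le1 by simp

lemma Pm_Suc: "Pm \<alpha> (Suc m) t = Pm \<alpha> m t * (complex_of_real (cc \<alpha> m) * ff (cc \<alpha> m) t)"
  unfolding Pm_def by simp
lemma Pc_Suc: "Pc \<alpha> (Suc m) t = Pc \<alpha> m t * (complex_of_real (cc \<alpha> m) * gg (cc \<alpha> m) t)"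
  unfolding Pc_def by simp

lemma gg_meas[measurable]: "(\<lambda>t. gg a t) \<in> borel_measurable borel"
  unfolding gg_def by measurable

lemma Pm_meas[measurable]: "Pm \<alpha> m \<in> borel_measurable borel"
  unfolding Pm_def by (rule borel_measurable_prod) simp
lemma Pc_meas[measurable]: "Pc \<alpha> m \<in> borel_measurable borel"
  unfolding Pc_def by (rule borel_measurable_prod) simp
lemma HH_meas[measurable]: "HH \<alpha> u v \<in> borel_measurable borel"
  unfolding HH_def by measurable

lemma HH_bound:
  assumes "\<alpha> > 0"
  shows "norm (HH \<alpha> u v t) \<le> (cc \<alpha> u + cc \<alpha> v) * (1 / (1 + t\<^sup>2))"
proof -
  have a: "cc \<alpha> u \<ge> 1" "cc \<alpha> v \<ge> 1" using cc_ge1 assms by auto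
  have "norm (HH \<alpha> u v t) = norm (Pm \<alpha> u t) * norm (Pc \<alpha> v t) * ((cc \<alpha> u + cc \<alpha> v) * (norm (ff (cc \<alpha> u) t) * norm (ff (cc \<alpha> v) t)))"
  proof -
    have nrm: "norm (complex_of_real (cc \<alpha> u + cc \<alpha> v)) = cc \<alpha> u + cc \<alpha> v" using a by (simp only: norm_of_real abs_of_nonneg)
    show ?thesis unfolding HH_def ff_gg_sum[OF a] norm_mult norm_gg nrm by simp
  qed
  also have "\<dots> \<le> 1 * 1 * ((cc \<alpha> u + cc \<alpha> v) * (1 / (1 + t\<^sup>2)))"
    using a norm_Pm_le1[OF assms] norm_Pc_le1[OF assms] norm_ff2[OF a]
    by (intro mult_mono) auto
  finally show ?thesis by simp
qed

lemma HH_int: "\<alpha> > 0 \<Longrightarrow> integrable lborel (HH \<alpha> u v)"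
proof (rule Bochner_Integration.integrable_bound[OF integrable_mult_right[OF inv1sq(1), of "cc \<alpha> u + cc \<alpha> v"]])
  assume "\<alpha> > 0"
  then have "norm (HH \<alpha> u v x) \<le> norm ((cc \<alpha> u + cc \<alpha> v) * (1 / (1 + x\<^sup>2)))" for x
  proof -
    have "0 \<le> cc \<alpha> u + cc \<alpha> v" using cc_ge1[OF \<open>\<alpha> > 0\<close>, of u] cc_ge1[OF \<open>\<alpha> > 0\<close>, of v] by simp
    moreover have "0 < 1 + x\<^sup>2" by (simp add: add_pos_nonneg)
    ultimately have "norm ((cc \<alpha> u + cc \<alpha> v) * (1 / (1 + x\<^sup>2))) = (cc \<alpha> u + cc \<alpha> v) * (1 / (1 + x\<^sup>2))"
      by (simp add: abs_of_nonneg)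
    then show ?thesis using HH_bound[OF \<open>\<alpha> > 0\<close>, of u v x] by (simp only:)
  qed
  then show "AE x in lborel. norm (HH \<alpha> u v x) \<le> norm ((cc \<alpha> u + cc \<alpha> v) * (1 / (1 + x\<^sup>2)))"
    by simp
qed measurable

lemma ac_aux:
  fixes r s c P Q f g :: complex
  assumes "r * s = c"
  shows "r * (P * Q * (s * f * g)) = P * (c * f) * Q * g"
proof -
  have "r * (P * Q * (s * f * g)) = (r * s) * (P * Q * f * g)" by (simp add: ac_simps)
  also have "\<dots> = c * (P * Q * f * g)" by (simp add: assms)
  also have "\<dots> = P * (c * f) * Q * g" by (simp add: ac_simps)
  finally show ?thesis .
qed

lemma ac_aux2:
  fixes r s c P Q f g :: complex
  assumes "r * s = c"
  shows "r * (P * Q * (s * f * g)) = P * f * (Q * (c * g))"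
proof -
  have "r * (P * Q * (s * f * g)) = (r * s) * (P * Q * f * g)" by (simp add: ac_simps)
  also have "\<dots> = c * (P * Q * f * g)" by (simp add: assms)
  also have "\<dots> = P * f * (Q * (c * g))" by (simp add: ac_simps)
  finally show ?thesis .
qed

lemma L1:
  assumes "\<alpha> > 0"
  shows "complex_of_real (rr \<alpha> u w) * HH \<alpha> u w t = Pm \<alpha> (Suc u) t * Pc \<alpha> w t * gg (cc \<alpha> w) t"
proof -
  have a: "cc \<alpha> u \<ge> 1" "cc \<alpha> w \<ge> 1" using cc_ge1 assms by auto
  have "complex_of_real (rr \<alpha> u w) * complex_of_real (cc \<alpha> u + cc \<alpha> w) = complex_of_real (cc \<alpha> u)"
    using a unfolding rr_def of_real_mult[symmetric] by simp
  then show ?thesis unfolding HH_def ff_gg_sum[OF a] Pm_Suc by (rule ac_aux)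
qed

lemma L2:
  assumes "\<alpha> > 0"
  shows "complex_of_real (1 - rr \<alpha> w v) * HH \<alpha> w v t = Pm \<alpha> w t * Pc \<alpha> (Suc v) t * ff (cc \<alpha> w) t"
proof -
  have a: "cc \<alpha> w \<ge> 1" "cc \<alpha> v \<ge> 1" using cc_ge1 assms by auto
  have "(1 - rr \<alpha> w v) * (cc \<alpha> w + cc \<alpha> v) = cc \<alpha> v"
    using a unfolding rr_def by (simp add: field_simps)
  then have "complex_of_real (1 - rr \<alpha> w v) * complex_of_real (cc \<alpha> w + cc \<alpha> v) = complex_of_real (cc \<alpha> v)"
    by (metis of_real_mult)
  then have "complex_of_real (1 - rr \<alpha> w v) * HH \<alpha> w v t = Pm \<alpha> w t * ff (cc \<alpha> w) t * (Pc \<alpha> v t * (complex_of_real (cc \<alpha> v) * gg (cc \<alpha> v) t))"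
    unfolding HH_def ff_gg_sum[OF a] by (rule ac_aux2)
  then show ?thesis unfolding Pc_Suc by (simp add: ac_simps)
qed

lemma I00: "\<alpha> > 0 \<Longrightarrow> HH \<alpha> 0 0 t = complex_of_real (2 / (1 + t\<^sup>2))"
proof -
  have e: "(1 - \<i> * complex_of_real t) * (1 + \<i> * complex_of_real t) = complex_of_real (1 + t\<^sup>2)"
    by (simp add: algebra_simps power2_eq_square)
  have "ff 1 t * gg 1 t = 1 / ((1 - \<i> * complex_of_real t) * (1 + \<i> * complex_of_real t))"
    unfolding ff_def gg_def by simp
  then have f: "ff 1 t * gg 1 t = complex_of_real (1 / (1 + t\<^sup>2))" unfolding e by simp
  have "HH \<alpha> 0 0 t = complex_of_real 2 * (ff 1 t * gg 1 t)"
    unfolding HH_def Pm_def Pc_def cc0 ff_gg_sum[OF order.refl order.refl] by simp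
  also have "\<dots> = complex_of_real (2 / (1 + t\<^sup>2))" unfolding f of_real_mult[symmetric] by simp
  finally show ?thesis .
qed

lemma Iuv: "\<alpha> > 0 \<Longrightarrow> HH \<alpha> (Suc u) (Suc v) t =
   complex_of_real (rr \<alpha> u (Suc v)) * HH \<alpha> u (Suc v) t + complex_of_real (1 - rr \<alpha> (Suc u) v) * HH \<alpha> (Suc u) v t"
  unfolding L1 L2 by (simp add: HH_def algebra_simps)

lemma Iu: "\<alpha> > 0 \<Longrightarrow> HH \<alpha> (Suc u) 0 t =
   complex_of_real (rr \<alpha> u 0) * HH \<alpha> u 0 t + Pm \<alpha> (Suc u) t * ff (cc \<alpha> (Suc u)) t"
  unfolding L1 by (simp add: HH_def algebra_simps Pc_def)

lemma Iv: "\<alpha> > 0 \<Longrightarrow> HH \<alpha> 0 (Suc v) t =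
   complex_of_real (1 - rr \<alpha> 0 v) * HH \<alpha> 0 v t + Pc \<alpha> (Suc v) t * gg (cc \<alpha> (Suc v)) t"
  unfolding L2 by (simp add: HH_def algebra_simps Pm_def)

lemma E1_eq: "Pm \<alpha> (Suc u) t * ff (cc \<alpha> (Suc u)) t =
  (\<Prod>k<Suc u. complex_of_real (cc \<alpha> k)) * (\<Prod>k\<in>{..Suc u}. ff (cc \<alpha> k) t)"
  unfolding Pm_def prod.distrib by (simp add: lessThan_Suc_atMost[symmetric] ac_simps)

lemma E1_int:
  assumes "\<alpha> > 0"
  shows "integrable lborel (\<lambda>t. Pm \<alpha> (Suc u) t * ff (cc \<alpha> (Suc u)) t)"
    "(LINT t|lborel. Pm \<alpha> (Suc u) t * ff (cc \<alpha> (Suc u)) t) = 0"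
proof -
  have i: "integrable lborel (\<lambda>t. \<Prod>k\<in>{..Suc u}. ff (cc \<alpha> k) t)"
    using assms by (intro prod_ff_integrable) (auto intro: cc_ge1)
  have z: "(LINT t|lborel. (\<Prod>k\<in>{..Suc u}. ff (cc \<alpha> k) t)) = 0"
    using assms cc_inj[OF assms] by (intro prod_ff_zero) (auto intro: cc_ge1 inj_on_subset)
  show "integrable lborel (\<lambda>t. Pm \<alpha> (Suc u) t * ff (cc \<alpha> (Suc u)) t)"
    unfolding E1_eq using i by simp
  show "(LINT t|lborel. Pm \<alpha> (Suc u) t * ff (cc \<alpha> (Suc u)) t) = 0"
    unfolding E1_eq using z by simp
qed

lemma E2_int:
  assumes "\<alpha> > 0"
  shows "integrable lborel (\<lambda>t. Pc \<alpha> (Suc u) t * gg (cc \<alpha> (Suc u)) t)"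
    "(LINT t|lborel. Pc \<alpha> (Suc u) t * gg (cc \<alpha> (Suc u)) t) = 0"
proof -
  have e: "Pc \<alpha> (Suc u) t * gg (cc \<alpha> (Suc u)) t = cnj (Pm \<alpha> (Suc u) t * ff (cc \<alpha> (Suc u)) t)" for t
    unfolding Pc_cnj gg_cnj by simp
  show "integrable lborel (\<lambda>t. Pc \<alpha> (Suc u) t * gg (cc \<alpha> (Suc u)) t)"
    unfolding e using E1_int(1)[OF assms] by (rule integrable_cnj)
  show "(LINT t|lborel. Pc \<alpha> (Suc u) t * gg (cc \<alpha> (Suc u)) t) = 0"
  proof -
    have "(LINT t|lborel. cnj (Pm \<alpha> (Suc u) t * ff (cc \<alpha> (Suc u)) t)) = cnj (LINT t|lborel. Pm \<alpha> (Suc u) t * ff (cc \<alpha> (Suc u)) t)"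
      by (rule Bochner_Integration.integral_cnj)
    then show ?thesis by (simp only: e E1_int(2)[OF assms] complex_cnj_zero)
  qed
qed

lemma QQ_formula:
  "\<alpha> > 0 \<Longrightarrow> complex_of_real (QQ \<alpha> u v) = complex_of_real (1 / (2 * pi)) * (LINT t|lborel. HH \<alpha> u v t)"
proof (induction \<alpha> u v rule: QQ.induct)
  case (1 \<alpha>)
  have "(LINT t|lborel. HH \<alpha> 0 0 t) = (LINT t|lborel. complex_of_real (2 * (1 / (1 + t\<^sup>2))))"
    using I00[OF 1] by simp
  also have "\<dots> = complex_of_real (2 * pi)"
    by (simp only: integral_complex_of_real integral_mult_right_zero inv1sq(2))
  finally show ?case by simp
next
  case (2 \<alpha> u)
  have "(LINT t|lborel. HH \<alpha> (Suc u) 0 t) = (LINT t|lborel. complex_of_real (rr \<alpha> u 0) * HH \<alpha> u 0 t + Pm \<alpha> (Suc u) t * ff (cc \<alpha> (Suc u)) t)"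
    using Iu[OF 2(2)] by simp
  also have "\<dots> = complex_of_real (rr \<alpha> u 0) * (LINT t|lborel. HH \<alpha> u 0 t)"
    using HH_int[OF 2(2)] E1_int[OF 2(2)] by simp
  finally show ?case using 2 by simp
next
  case (3 \<alpha> v)
  have "(LINT t|lborel. HH \<alpha> 0 (Suc v) t) = (LINT t|lborel. complex_of_real (1 - rr \<alpha> 0 v) * HH \<alpha> 0 v t + Pc \<alpha> (Suc v) t * gg (cc \<alpha> (Suc v)) t)"
    using Iv[OF 3(2)] by simp
  also have "\<dots> = complex_of_real (1 - rr \<alpha> 0 v) * (LINT t|lborel. HH \<alpha> 0 v t)"
    using HH_int[OF 3(2)] E2_int[OF 3(2)] by simp
  finally show ?case using 3 by simp
next
  case (4 \<alpha> u v)
  have "(LINT t|lborel. HH \<alpha> (Suc u) (Suc v) t) = (LINT t|lborel. complex_of_real (rr \<alpha> u (Suc v)) * HH \<alpha> u (Suc v) t + complex_of_real (1 - rr \<alpha> (Suc u) v) * HH \<alpha> (Suc u) v t)"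
    using Iuv[OF 4(3)] by simp
  also have "\<dots> = complex_of_real (rr \<alpha> u (Suc v)) * (LINT t|lborel. HH \<alpha> u (Suc v) t) + complex_of_real (1 - rr \<alpha> (Suc u) v) * (LINT t|lborel. HH \<alpha> (Suc u) v t)"
    using HH_int[OF 4(3)] by simp
  finally have calc: "(LINT t|lborel. HH \<alpha> (Suc u) (Suc v) t) = complex_of_real (rr \<alpha> u (Suc v)) * (LINT t|lborel. HH \<alpha> u (Suc v) t) + complex_of_real (1 - rr \<alpha> (Suc u) v) * (LINT t|lborel. HH \<alpha> (Suc u) v t)" .
  show ?case unfolding QQ.simps of_real_add of_real_mult 4(1)[OF 4(3)] 4(2)[OF 4(3)] calc
    by (simp only: ring_distribs ac_simps)
qed



lemma step_supp: "set_pmf (urn_step \<alpha> (a, b)) \<subseteq> {(a+1, b), (a, b+1)}"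
  unfolding urn_step_def by auto

lemma paths_Suc: "urn_paths \<alpha> (Suc (Suc (Suc m))) =
  bind_pmf (urn_paths \<alpha> (Suc (Suc m))) (\<lambda>xs. map_pmf (\<lambda>s. xs @ [s]) (urn_step \<alpha> (last xs)))"
  by simp

lemma paths_supp:
  "xs \<in> set_pmf (urn_paths \<alpha> (Suc (Suc m))) \<Longrightarrow>
     length xs = Suc m \<and> (\<forall>k<Suc m. fst (xs!k) + snd (xs!k) = k + 2 \<and> fst (xs!k) \<ge> 1 \<and> snd (xs!k) \<ge> 1)"
proof (induction m arbitrary: xs)
  case 0
  then show ?case by simp
next
  case (Suc m)
  from Suc.prems obtain ys s where ys: "ys \<in> set_pmf (urn_paths \<alpha> (Suc (Suc m)))"
    and s: "s \<in> set_pmf (urn_step \<alpha> (last ys))" and xs: "xs = ys @ [s]"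
    by (auto simp del: urn_paths.simps simp: paths_Suc)
  have IH: "length ys = Suc m" "\<And>k. k < Suc m \<Longrightarrow> fst (ys!k) + snd (ys!k) = k + 2 \<and> fst (ys!k) \<ge> 1 \<and> snd (ys!k) \<ge> 1"
    using Suc.IH[OF ys] by auto
  have "last ys = ys ! (length ys - 1)" by (rule last_conv_nth) (use IH(1) in auto)
  then have last: "last ys = ys ! m" using IH(1) by simp
  obtain a b where ab: "last ys = (a, b)" by (cases "last ys")
  have "a + b = m + 2" "a \<ge> 1" "b \<ge> 1" using IH(2)[of m] last ab by (metis fst_conv snd_conv lessI)+
  moreover have "s = (a+1, b) \<or> s = (a, b+1)" using s step_supp[of \<alpha> a b] ab by auto
  ultimately have sp: "fst s + snd s = Suc m + 2 \<and> fst s \<ge> 1 \<and> snd s \<ge> 1" by auto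
  show ?case
  proof (intro conjI allI impI)
    show "length xs = Suc (Suc m)" using xs IH by simp
    fix k assume k: "k < Suc (Suc m)"
    show "fst (xs!k) + snd (xs!k) = k + 2" "fst (xs!k) \<ge> 1" "snd (xs!k) \<ge> 1"
      using k IH sp unfolding xs by (auto simp: nth_append less_Suc_eq)
  qed
qed

definition LL :: "real \<Rightarrow> nat \<Rightarrow> (nat \<times> nat) pmf" where
  "LL \<alpha> n = map_pmf last (urn_paths \<alpha> n)"

lemma LL2: "LL \<alpha> (Suc (Suc 0)) = return_pmf (1, 1)"
  unfolding LL_def by simp

lemma LL_Suc: "LL \<alpha> (Suc (Suc (Suc m))) = bind_pmf (LL \<alpha> (Suc (Suc m))) (urn_step \<alpha>)"
  unfolding LL_def paths_Suc map_bind_pmf bind_map_pmf map_pmf_comp by simp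

lemma LL_supp: "s \<in> set_pmf (LL \<alpha> (Suc (Suc m))) \<Longrightarrow> fst s + snd s = m + 2 \<and> fst s \<ge> 1 \<and> snd s \<ge> 1"
proof -
  assume "s \<in> set_pmf (LL \<alpha> (Suc (Suc m)))"
  then obtain xs where xs: "xs \<in> set_pmf (urn_paths \<alpha> (Suc (Suc m)))" "s = last xs"
    unfolding LL_def by auto
  have "length xs = Suc m" "fst (xs!m) + snd (xs!m) = m + 2 \<and> fst (xs!m) \<ge> 1 \<and> snd (xs!m) \<ge> 1"
    using paths_supp[OF xs(1)] by auto
  moreover have "last xs = xs ! (length xs - 1)" by (rule last_conv_nth) (use \<open>length xs = Suc m\<close> in auto)
  ultimately show ?thesis using xs(2) by simp
qed

lemma step_pmf:
  assumes "a \<ge> 1" "b \<ge> 1"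
  shows "pmf (urn_step \<alpha> (a, b)) x =
    (if x = (a+1, b) then real a powr \<alpha> / (real a powr \<alpha> + real b powr \<alpha>) else 0) +
    (if x = (a, b+1) then 1 - real a powr \<alpha> / (real a powr \<alpha> + real b powr \<alpha>) else 0)"
proof -
  define p where "p = real a powr \<alpha> / (real a powr \<alpha> + real b powr \<alpha>)"
  have pos: "real a powr \<alpha> > 0" "real b powr \<alpha> > 0" using assms by auto
  have s: "0 < real a powr \<alpha> + real b powr \<alpha>" using pos by linarith
  have p01: "0 \<le> p" "p \<le> 1"
    unfolding p_def divide_le_eq_1_pos[OF s] using pos s by (auto intro: divide_nonneg_pos)
  define f where "f = (\<lambda>bb. if bb then (a + 1, b) else (a, b + 1))"
  have "pmf (urn_step \<alpha> (a, b)) x = measure (measure_pmf (bernoulli_pmf p)) (f -` {x})"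
    unfolding urn_step_def p_def f_def by (simp add: pmf_map)
  also have "\<dots> = (if x = (a+1, b) then p else 0) + (if x = (a, b+1) then 1 - p else 0)"
  proof -
    consider "x = (a+1, b)" | "x = (a, b+1)" | "x \<noteq> (a+1,b) \<and> x \<noteq> (a, b+1)" by blast
    then show ?thesis
    proof cases
      case 1
      then have "f -` {x} = {True}" unfolding f_def by (auto split: if_splits)
      then show ?thesis using 1 p01 by (simp add: measure_pmf_single)
    next
      case 2
      then have "f -` {x} = {False}" unfolding f_def by (auto split: if_splits)
      then show ?thesis using 2 p01 by (simp add: measure_pmf_single)
    next
      case 3
      then have "f -` {x} = {}" unfolding f_def by (auto split: if_splits)
      then show ?thesis using 3 by simp
    qed
  qed
  finally show ?thesis unfolding p_def .
qed

lemma rr_eq: "rr \<alpha> u v = real (Suc u) powr \<alpha> / (real (Suc u) powr \<alpha> + real (Suc v) powr \<alpha>)"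
  unfolding rr_def cc_def ..

lemma LL_pmf: "pmf (LL \<alpha> (u + v + 2)) (Suc u, Suc v) = QQ \<alpha> u v"
proof (induction \<alpha> u v rule: QQ.induct)
  case (1 \<alpha>)
  then show ?case by (simp add: LL2 numeral_2_eq_2)
next
  case (2 \<alpha> u)
  have e: "Suc u + 0 + 2 = Suc (Suc (Suc u))" "u + 0 + 2 = Suc (Suc u)" by simp_all
  have "pmf (LL \<alpha> (Suc u + 0 + 2)) (Suc (Suc u), Suc 0) =
     (\<integral>s. pmf (urn_step \<alpha> s) (Suc (Suc u), Suc 0) \<partial>measure_pmf (LL \<alpha> (Suc (Suc u))))"
    unfolding e LL_Suc pmf_bind ..
  also have "\<dots> = (\<Sum>s\<in>{(Suc u, Suc 0)}. pmf (urn_step \<alpha> s) (Suc (Suc u), Suc 0) * pmf (LL \<alpha> (Suc (Suc u))) s)"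
  proof (rule integral_measure_pmf_real)
    fix s assume s: "s \<in> set_pmf (LL \<alpha> (Suc (Suc u)))" and nz: "pmf (urn_step \<alpha> s) (Suc (Suc u), Suc 0) \<noteq> 0"
    obtain a b where ab: "s = (a, b)" by (cases s)
    have sp: "a + b = u + 2" "a \<ge> 1" "b \<ge> 1" using LL_supp[OF s] ab by auto
    show "s \<in> {(Suc u, Suc 0)}" using nz sp unfolding ab step_pmf[OF sp(2,3)] by (auto split: if_splits)
  qed simp
  also have "\<dots> = rr \<alpha> u 0 * QQ \<alpha> u 0"
    using 2[unfolded e(2)] by (simp add: step_pmf rr_eq)
  finally show ?case by simp
next
  case (3 \<alpha> v)
  have e: "0 + Suc v + 2 = Suc (Suc (Suc v))" "0 + v + 2 = Suc (Suc v)" by simp_all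
  have "pmf (LL \<alpha> (0 + Suc v + 2)) (Suc 0, Suc (Suc v)) =
     (\<integral>s. pmf (urn_step \<alpha> s) (Suc 0, Suc (Suc v)) \<partial>measure_pmf (LL \<alpha> (Suc (Suc v))))"
    unfolding e LL_Suc pmf_bind ..
  also have "\<dots> = (\<Sum>s\<in>{(Suc 0, Suc v)}. pmf (urn_step \<alpha> s) (Suc 0, Suc (Suc v)) * pmf (LL \<alpha> (Suc (Suc v))) s)"
  proof (rule integral_measure_pmf_real)
    fix s assume s: "s \<in> set_pmf (LL \<alpha> (Suc (Suc v)))" and nz: "pmf (urn_step \<alpha> s) (Suc 0, Suc (Suc v)) \<noteq> 0"
    obtain a b where ab: "s = (a, b)" by (cases s)
    have sp: "a + b = v + 2" "a \<ge> 1" "b \<ge> 1" using LL_supp[OF s] ab by auto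
    show "s \<in> {(Suc 0, Suc v)}" using nz sp unfolding ab step_pmf[OF sp(2,3)] by (auto split: if_splits)
  qed simp
  also have "\<dots> = (1 - rr \<alpha> 0 v) * QQ \<alpha> 0 v"
    using 3[unfolded e(2)] by (simp add: step_pmf rr_eq)
  finally show ?case by simp
next
  case (4 \<alpha> u v)
  have e: "Suc u + Suc v + 2 = Suc (Suc (Suc (Suc (u + v))))" "u + Suc v + 2 = Suc (Suc (Suc (u + v)))"
    "Suc u + v + 2 = Suc (Suc (Suc (u + v)))" by simp_all
  let ?M = "LL \<alpha> (Suc (Suc (Suc (u + v))))"
  let ?x = "(Suc (Suc u), Suc (Suc v))"
  have "pmf (LL \<alpha> (Suc u + Suc v + 2)) ?x = (\<integral>s. pmf (urn_step \<alpha> s) ?x \<partial>measure_pmf ?M)"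
    unfolding e(1) LL_Suc pmf_bind ..
  also have "\<dots> = (\<Sum>s\<in>{(Suc u, Suc (Suc v)), (Suc (Suc u), Suc v)}. pmf (urn_step \<alpha> s) ?x * pmf ?M s)"
  proof (rule integral_measure_pmf_real)
    fix s assume s: "s \<in> set_pmf ?M" and nz: "pmf (urn_step \<alpha> s) ?x \<noteq> 0"
    obtain a b where ab: "s = (a, b)" by (cases s)
    have sp: "a + b = Suc (u + v) + 2" "a \<ge> 1" "b \<ge> 1" using LL_supp[OF s] ab by auto
    show "s \<in> {(Suc u, Suc (Suc v)), (Suc (Suc u), Suc v)}" using nz sp unfolding ab step_pmf[OF sp(2,3)] by (auto split: if_splits)
  qed simp
  also have "\<dots> = rr \<alpha> u (Suc v) * QQ \<alpha> u (Suc v) + (1 - rr \<alpha> (Suc u) v) * QQ \<alpha> (Suc u) v"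
    using 4(1)[unfolded e(2)] 4(2)[unfolded e(3)] by (simp add: step_pmf rr_eq)
  finally show ?case by (simp add: ac_simps)
qed

definition EE :: "nat \<Rightarrow> nat \<Rightarrow> (nat \<times> nat) list set" where
  "EE i j = {xs. (i, j) \<in> set xs}"

lemma PP_zero:
  assumes "m < u + v"
  shows "measure_pmf.prob (urn_paths \<alpha> (Suc (Suc m))) (EE (Suc u) (Suc v)) = 0"
  unfolding measure_pmf_zero_iff
proof (rule equals0I)
  fix xs assume "xs \<in> set_pmf (urn_paths \<alpha> (Suc (Suc m))) \<inter> EE (Suc u) (Suc v)"
  then have xs: "xs \<in> set_pmf (urn_paths \<alpha> (Suc (Suc m)))" "(Suc u, Suc v) \<in> set xs" unfolding EE_def by auto
  from xs(2) obtain k where k: "k < length xs" "xs ! k = (Suc u, Suc v)" by (auto simp: in_set_conv_nth)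
  from paths_supp[OF xs(1)] k have "Suc u + Suc v = k + 2" "k < Suc m" by auto
  then show False using assms by simp
qed

lemma PP_base:
  "measure_pmf.prob (urn_paths \<alpha> (Suc (Suc (u + v)))) (EE (Suc u) (Suc v)) = QQ \<alpha> u v"
proof -
  let ?M = "urn_paths \<alpha> (Suc (Suc (u + v)))"
  have "EE (Suc u) (Suc v) \<inter> set_pmf ?M = last -` {(Suc u, Suc v)} \<inter> set_pmf ?M"
  proof (intro set_eqI iffI)
    fix xs assume a: "xs \<in> EE (Suc u) (Suc v) \<inter> set_pmf ?M"
    then have xs: "xs \<in> set_pmf ?M" "(Suc u, Suc v) \<in> set xs" unfolding EE_def by auto
    from xs(2) obtain k where k: "k < length xs" "xs ! k = (Suc u, Suc v)" by (auto simp: in_set_conv_nth)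
    from paths_supp[OF xs(1)] k have l: "length xs = Suc (u + v)" "Suc u + Suc v = k + 2" by auto
    have "last xs = xs ! (length xs - 1)" by (rule last_conv_nth) (use l in auto)
    then have "last xs = (Suc u, Suc v)" using l k by simp
    then show "xs \<in> last -` {(Suc u, Suc v)} \<inter> set_pmf ?M" using xs by simp
  next
    fix xs assume a: "xs \<in> last -` {(Suc u, Suc v)} \<inter> set_pmf ?M"
    then have xs: "xs \<in> set_pmf ?M" "last xs = (Suc u, Suc v)" by auto
    from paths_supp[OF xs(1)] have "xs \<noteq> []" by auto
    then have "(Suc u, Suc v) \<in> set xs" using xs(2) last_in_set by metis
    then show "xs \<in> EE (Suc u) (Suc v) \<inter> set_pmf ?M" using xs unfolding EE_def by simp
  qed
  then have "measure_pmf.prob ?M (EE (Suc u) (Suc v)) = measure_pmf.prob ?M (last -` {(Suc u, Suc v)})"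
    by (metis measure_Int_set_pmf)
  also have "\<dots> = pmf (LL \<alpha> (u + v + 2)) (Suc u, Suc v)"
    unfolding LL_def pmf_map by simp
  also have "\<dots> = QQ \<alpha> u v" by (rule LL_pmf)
  finally show ?thesis .
qed

lemma PP_step:
  assumes "u + v \<le> m"
  shows "measure_pmf.prob (urn_paths \<alpha> (Suc (Suc (Suc m)))) (EE (Suc u) (Suc v)) =
         measure_pmf.prob (urn_paths \<alpha> (Suc (Suc m))) (EE (Suc u) (Suc v))"
proof -
  let ?f = "\<lambda>xs. xs \<in> EE (Suc u) (Suc v)"
  have "map_pmf ?f (urn_paths \<alpha> (Suc (Suc (Suc m)))) =
        bind_pmf (urn_paths \<alpha> (Suc (Suc m))) (\<lambda>xs. map_pmf (\<lambda>s. ?f (xs @ [s])) (urn_step \<alpha> (last xs)))"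
    unfolding paths_Suc map_bind_pmf map_pmf_comp by simp
  also have "\<dots> = bind_pmf (urn_paths \<alpha> (Suc (Suc m))) (\<lambda>xs. return_pmf (?f xs))"
  proof (rule bind_pmf_cong[OF refl])
    fix xs assume xs: "xs \<in> set_pmf (urn_paths \<alpha> (Suc (Suc m)))"
    from paths_supp[OF xs] have l: "length xs = Suc m" "fst (xs!m) + snd (xs!m) = m + 2" by auto
    have "last xs = xs ! (length xs - 1)" by (rule last_conv_nth) (use l in auto)
    then have la: "fst (last xs) + snd (last xs) = m + 2" using l by simp
    obtain a b where ab: "last xs = (a, b)" by (cases "last xs")
    have "map_pmf (\<lambda>s. ?f (xs @ [s])) (urn_step \<alpha> (last xs)) = map_pmf (\<lambda>s. ?f xs) (urn_step \<alpha> (last xs))"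
    proof (rule map_pmf_cong[OF refl])
      fix s assume "s \<in> set_pmf (urn_step \<alpha> (last xs))"
      then have "s = (a+1, b) \<or> s = (a, b+1)" using step_supp[of \<alpha> a b] ab by auto
      then have "s \<noteq> (Suc u, Suc v)" using la ab assms by auto
      then show "?f (xs @ [s]) = ?f xs" unfolding EE_def by auto
    qed
    then show "map_pmf (\<lambda>s. ?f (xs @ [s])) (urn_step \<alpha> (last xs)) = return_pmf (?f xs)" by simp
  qed
  also have "\<dots> = map_pmf ?f (urn_paths \<alpha> (Suc (Suc m)))" by (simp add: map_pmf_def)
  finally have eq: "map_pmf ?f (urn_paths \<alpha> (Suc (Suc (Suc m)))) = map_pmf ?f (urn_paths \<alpha> (Suc (Suc m)))" .
  have "measure_pmf.prob (urn_paths \<alpha> n) (EE (Suc u) (Suc v)) = measure_pmf.prob (map_pmf ?f (urn_paths \<alpha> n)) {True}" for n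
    by (simp add: vimage_def)
  then show ?thesis using eq by metis
qed

lemma PP_after:
  "measure_pmf.prob (urn_paths \<alpha> (Suc (Suc (u + v + k)))) (EE (Suc u) (Suc v)) = QQ \<alpha> u v"
proof (induction k)
  case 0 then show ?case using PP_base by simp
next
  case (Suc k)
  then show ?case using PP_step[of u v "u + v + k" \<alpha>] by simp
qed

lemma QQ_nonneg: "0 \<le> QQ \<alpha> u v"
  using LL_pmf[of \<alpha> u v] by (metis pmf_nonneg)

lemma PP_le: "measure_pmf.prob (urn_paths \<alpha> n) (EE (Suc u) (Suc v)) \<le> QQ \<alpha> u v"
proof -
  have main: "measure_pmf.prob (urn_paths \<alpha> (Suc (Suc m))) (EE (Suc u) (Suc v)) \<le> QQ \<alpha> u v" for m
  proof (cases "m < u + v")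
    case True then show ?thesis using PP_zero QQ_nonneg by simp
  next
    case False
    then obtain k where "m = u + v + k" by (metis le_add_diff_inverse not_less)
    then show ?thesis using PP_after by simp
  qed
  show ?thesis
  proof (cases "n \<ge> 2")
    case True
    then obtain m where "n = Suc (Suc m)" by (metis add_2_eq_Suc le_add_diff_inverse)
    then show ?thesis using main by simp
  next
    case False
    then have "n = 0 \<or> n = 1" by linarith
    then have "urn_paths \<alpha> n = urn_paths \<alpha> (Suc (Suc 0))" by auto
    then show ?thesis using main[of 0] by simp
  qed
qed

lemma bingo_QQ: "bingo_prob \<alpha> (Suc u) (Suc v) = QQ \<alpha> u v"
proof -
  have eq: "bingo_prob \<alpha> (Suc u) (Suc v) = (SUP n. measure_pmf.prob (urn_paths \<alpha> n) (EE (Suc u) (Suc v)))"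
    unfolding bingo_prob_def EE_def ..
  show ?thesis unfolding eq
  proof (rule antisym)
    show "(SUP n. measure_pmf.prob (urn_paths \<alpha> n) (EE (Suc u) (Suc v))) \<le> QQ \<alpha> u v"
      by (rule cSUP_least) (auto intro: PP_le)
    have "QQ \<alpha> u v = measure_pmf.prob (urn_paths \<alpha> (Suc (Suc (u + v + 0)))) (EE (Suc u) (Suc v))"
      using PP_after[of \<alpha> u v 0] by simp
    also have "\<dots> \<le> (SUP n. measure_pmf.prob (urn_paths \<alpha> n) (EE (Suc u) (Suc v)))"
      by (rule cSUP_upper) (auto intro!: bdd_aboveI[where M="QQ \<alpha> u v"] PP_le)
    finally show "QQ \<alpha> u v \<le> (SUP n. measure_pmf.prob (urn_paths \<alpha> n) (EE (Suc u) (Suc v)))" .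
  qed
qed



definition gk :: "real \<Rightarrow> real \<Rightarrow> nat \<Rightarrow> real" where
  "gk \<alpha> t k = real (Suc k) powr (2 * \<alpha>) / (real (Suc k) powr (2 * \<alpha>) + t\<^sup>2)"

definition Rf :: "real \<Rightarrow> real \<Rightarrow> real" where
  "Rf \<alpha> t = prodinf (gk \<alpha> t)"

lemma sum_pow: "\<alpha> > 1 \<Longrightarrow> summable (\<lambda>k. real (Suc k) powr (-\<alpha>))"
proof -
  assume "\<alpha> > 1"
  then have "summable (\<lambda>n. real n powr (-\<alpha>))" by (subst summable_real_powr_iff) simp
  then show ?thesis by (subst summable_Suc_iff) 
qed

lemma cc_inv: "1 / cc \<alpha> k = real (Suc k) powr (-\<alpha>)"
  unfolding cc_def by (simp add: powr_minus_divide)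

lemma cc_sq: "(cc \<alpha> k)\<^sup>2 = real (Suc k) powr (2 * \<alpha>)"
  unfolding cc_def power2_eq_square powr_add[symmetric] by simp

lemma Pm_conv:
  assumes "\<alpha> > 1"
  shows "(\<lambda>m. Pm \<alpha> m t) \<longlonglongrightarrow> prodinf (\<lambda>k. complex_of_real (cc \<alpha> k) * ff (cc \<alpha> k) t)"
proof -
  let ?f = "\<lambda>k. complex_of_real (cc \<alpha> k) * ff (cc \<alpha> k) t"
  have c1: "cc \<alpha> k \<ge> 1" for k using cc_ge1 assms by simp
  have b: "norm (?f k - 1) \<le> \<bar>t\<bar> * real (Suc k) powr (-\<alpha>)" for k
  proof -
    have nz: "complex_of_real (cc \<alpha> k) - \<i> * complex_of_real t \<noteq> 0" using ff_nz[OF c1] .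
    have "?f k - 1 = \<i> * complex_of_real t * ff (cc \<alpha> k) t"
      unfolding ff_def using nz by (simp add: field_simps)
    then have "norm (?f k - 1) = \<bar>t\<bar> * (1 / sqrt ((cc \<alpha> k)\<^sup>2 + t\<^sup>2))"
      by (simp add: norm_mult norm_ff)
    also have "\<dots> \<le> \<bar>t\<bar> * (1 / cc \<alpha> k)"
    proof (intro mult_left_mono divide_left_mono)
      show "cc \<alpha> k \<le> sqrt ((cc \<alpha> k)\<^sup>2 + t\<^sup>2)" using c1 by (simp add: real_le_rsqrt)
    next
      have "0 < (cc \<alpha> k)\<^sup>2" using c1[of k] by simp
      then have "0 < sqrt ((cc \<alpha> k)\<^sup>2 + t\<^sup>2)" by (simp add: add_pos_nonneg)
      then show "0 < sqrt ((cc \<alpha> k)\<^sup>2 + t\<^sup>2) * cc \<alpha> k" using c1[of k] by simp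
    qed (use c1 in auto)
    finally show ?thesis unfolding cc_inv .
  qed
  have "summable (\<lambda>k. norm (?f k - 1))"
    by (rule summable_comparison_test'[where g="\<lambda>k. \<bar>t\<bar> * real (Suc k) powr (-\<alpha>)" and N=0])
       (use summable_mult[OF sum_pow[OF assms]] b in auto)
  then have "convergent_prod ?f"
    by (intro abs_convergent_prod_imp_convergent_prod summable_imp_abs_convergent_prod)
  then have "(\<lambda>n. \<Prod>k\<le>n. ?f k) \<longlonglongrightarrow> prodinf ?f" by (rule convergent_prod_LIMSEQ)
  then show ?thesis unfolding Pm_def LIMSEQ_lessThan_iff_atMost .
qed

lemma gk_convprod:
  assumes "\<alpha> > 1"
  shows "convergent_prod (gk \<alpha> t)"
proof -
  have c1: "cc \<alpha> k \<ge> 1" for k using cc_ge1 assms by simp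
  have b: "norm (gk \<alpha> t k - 1) \<le> t\<^sup>2 * real (Suc k) powr (-\<alpha>)" for k
  proof -
    have "0 < (cc \<alpha> k)\<^sup>2" using c1[of k] by simp
    then have p: "(cc \<alpha> k)\<^sup>2 + t\<^sup>2 > 0" by (simp add: add_pos_nonneg)
    have q: "(cc \<alpha> k)\<^sup>2 / ((cc \<alpha> k)\<^sup>2 + t\<^sup>2) = 1 - t\<^sup>2 / ((cc \<alpha> k)\<^sup>2 + t\<^sup>2)"
    proof -
      have "((cc \<alpha> k)\<^sup>2 + t\<^sup>2) / ((cc \<alpha> k)\<^sup>2 + t\<^sup>2) = 1" by (rule divide_self) (use p in linarith)
      then show ?thesis using add_divide_distrib[of "(cc \<alpha> k)\<^sup>2" "t\<^sup>2" "(cc \<alpha> k)\<^sup>2 + t\<^sup>2"] by linarith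
    qed
    have "gk \<alpha> t k - 1 = - (t\<^sup>2 / ((cc \<alpha> k)\<^sup>2 + t\<^sup>2))"
      unfolding gk_def cc_sq[symmetric] q by simp
    then have "norm (gk \<alpha> t k - 1) = t\<^sup>2 * (1 / ((cc \<alpha> k)\<^sup>2 + t\<^sup>2))" by simp
    also have "\<dots> \<le> t\<^sup>2 * (1 / cc \<alpha> k)"
    proof (intro mult_left_mono divide_left_mono)
      have "cc \<alpha> k * 1 \<le> cc \<alpha> k * cc \<alpha> k" by (rule mult_left_mono) (use c1[of k] in auto)
      then have "cc \<alpha> k \<le> (cc \<alpha> k)\<^sup>2" unfolding power2_eq_square by simp
      then show "cc \<alpha> k \<le> (cc \<alpha> k)\<^sup>2 + t\<^sup>2" using zero_le_power2[of t] by linarith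
    qed (use c1[of k] p in \<open>auto intro: mult_pos_pos\<close>)
    finally show ?thesis unfolding cc_inv .
  qed
  have "summable (\<lambda>k. norm (gk \<alpha> t k - 1))"
    by (rule summable_comparison_test'[where g="\<lambda>k. t\<^sup>2 * real (Suc k) powr (-\<alpha>)" and N=0])
       (use summable_mult[OF sum_pow[OF assms]] b in auto)
  then show "convergent_prod (gk \<alpha> t)"
    by (intro abs_convergent_prod_imp_convergent_prod summable_imp_abs_convergent_prod)
qed

lemma gk_conv:
  assumes "\<alpha> > 1"
  shows "(\<lambda>m. \<Prod>k<m. gk \<alpha> t k) \<longlonglongrightarrow> Rf \<alpha> t"
proof -
  have "(\<lambda>n. \<Prod>k\<le>n. gk \<alpha> t k) \<longlonglongrightarrow> prodinf (gk \<alpha> t)" by (rule convergent_prod_LIMSEQ[OF gk_convprod[OF assms]])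
  then show ?thesis unfolding Rf_def LIMSEQ_lessThan_iff_atMost .
qed

lemma GG_diag:
  assumes "\<alpha> > 0"
  shows "Pm \<alpha> m t * Pc \<alpha> m t = complex_of_real (\<Prod>k<m. gk \<alpha> t k)"
proof -
  have "complex_of_real (cc \<alpha> k) * ff (cc \<alpha> k) t * (complex_of_real (cc \<alpha> k) * gg (cc \<alpha> k) t) = complex_of_real (gk \<alpha> t k)" for k
  proof -
    have c1: "cc \<alpha> k \<ge> 1" using cc_ge1 assms by simp
    have e: "(complex_of_real (cc \<alpha> k) - \<i> * complex_of_real t) * (complex_of_real (cc \<alpha> k) + \<i> * complex_of_real t) = complex_of_real ((cc \<alpha> k)\<^sup>2 + t\<^sup>2)"
      by (simp add: algebra_simps power2_eq_square)
    have p: "(cc \<alpha> k)\<^sup>2 + t\<^sup>2 > 0" using c1 by (simp add: add_pos_nonneg)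
    have "complex_of_real (cc \<alpha> k) * ff (cc \<alpha> k) t * (complex_of_real (cc \<alpha> k) * gg (cc \<alpha> k) t)
       = complex_of_real ((cc \<alpha> k)\<^sup>2) / ((complex_of_real (cc \<alpha> k) - \<i> * complex_of_real t) * (complex_of_real (cc \<alpha> k) + \<i> * complex_of_real t))"
      unfolding ff_def gg_def by (simp add: power2_eq_square)
    also have "\<dots> = complex_of_real ((cc \<alpha> k)\<^sup>2 / ((cc \<alpha> k)\<^sup>2 + t\<^sup>2))" unfolding e by simp
    finally show ?thesis unfolding gk_def cc_sq .
  qed
  then show ?thesis unfolding Pm_def Pc_def prod.distrib[symmetric] by simp
qed

lemma GG_lim:
  assumes "\<alpha> > 1"
  shows "((\<lambda>p. Pm \<alpha> (fst p) t * Pc \<alpha> (snd p) t) \<longlongrightarrow> complex_of_real (Rf \<alpha> t)) (sequentially \<times>\<^sub>F sequentially)"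
proof -
  define P where "P = prodinf (\<lambda>k. complex_of_real (cc \<alpha> k) * ff (cc \<alpha> k) t)"
  have p1: "(\<lambda>m. Pm \<alpha> m t) \<longlonglongrightarrow> P" unfolding P_def by (rule Pm_conv[OF assms])
  then have p2: "(\<lambda>m. Pc \<alpha> m t) \<longlonglongrightarrow> cnj P" unfolding Pc_cnj by (rule tendsto_cnj)
  have "(\<lambda>m. Pm \<alpha> m t * Pc \<alpha> m t) \<longlonglongrightarrow> P * cnj P" by (intro tendsto_mult p1 p2)
  moreover have "(\<lambda>m. Pm \<alpha> m t * Pc \<alpha> m t) \<longlonglongrightarrow> complex_of_real (Rf \<alpha> t)"
    unfolding GG_diag[of \<alpha>, OF order.strict_trans[OF zero_less_one assms]] using assms by (intro tendsto_of_real gk_conv) auto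
  ultimately have PP: "P * cnj P = complex_of_real (Rf \<alpha> t)" by (rule LIMSEQ_unique)
  have "((\<lambda>p. Pm \<alpha> (fst p) t * Pc \<alpha> (snd p) t) \<longlongrightarrow> P * cnj P) (sequentially \<times>\<^sub>F sequentially)"
    by (intro tendsto_mult filterlim_compose[OF p1 filterlim_fst] filterlim_compose[OF p2 filterlim_snd])
  then show ?thesis unfolding PP .
qed

lemma Pm_Suc_bound:
  assumes "\<alpha> > 0"
  shows "norm (Pm \<alpha> (Suc m) t) \<le> norm (ff 1 t)"
proof -
  have "Pm \<alpha> (Suc m) t = (complex_of_real (cc \<alpha> 0) * ff (cc \<alpha> 0) t) *
      (\<Prod>k<m. complex_of_real (cc \<alpha> (Suc k)) * ff (cc \<alpha> (Suc k)) t)"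
    unfolding Pm_def by (rule prod.lessThan_Suc_shift)
  then have "norm (Pm \<alpha> (Suc m) t) = norm (ff 1 t) * norm (\<Prod>k<m. complex_of_real (cc \<alpha> (Suc k)) * ff (cc \<alpha> (Suc k)) t)"
    by (simp add: cc0 norm_mult)
  also have "\<dots> \<le> norm (ff 1 t) * 1"
    unfolding prod_norm[symmetric]
    by (intro mult_left_mono prod_le_1) (auto intro: norm_cff_le1 cc_ge1 assms)
  finally show ?thesis by simp
qed

lemma GG_bound:
  assumes "\<alpha> > 0" "m \<ge> 1" "n \<ge> 1"
  shows "norm (Pm \<alpha> m t * Pc \<alpha> n t) \<le> 1 / (1 + t\<^sup>2)"
proof -
  obtain m' n' where mn: "m = Suc m'" "n = Suc n'" using assms by (metis Suc_le_D One_nat_def)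
  have "norm (Pm \<alpha> m t * Pc \<alpha> n t) = norm (Pm \<alpha> (Suc m') t) * norm (Pm \<alpha> (Suc n') t)"
    unfolding mn Pc_cnj norm_mult by simp
  also have "\<dots> \<le> norm (ff 1 t) * norm (ff 1 t)"
    by (intro mult_mono Pm_Suc_bound assms) auto
  also have "\<dots> \<le> 1 / (1 + t\<^sup>2)" by (rule norm_ff2) auto
  finally show ?thesis .
qed

lemma gk_meas[measurable]: "(\<lambda>t. gk \<alpha> t k) \<in> borel_measurable borel"
  unfolding gk_def by measurable

lemma Rf_meas[measurable]: "\<alpha> > 1 \<Longrightarrow> Rf \<alpha> \<in> borel_measurable borel"
  by (rule borel_measurable_LIMSEQ_real[OF gk_conv]) (auto intro: borel_measurable_prod)

lemma GG_meas[measurable]: "(\<lambda>t. Pm \<alpha> m t * Pc \<alpha> n t) \<in> borel_measurable borel"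
  by measurable

lemma seq_lim: "(\<And>k. a k \<ge> Suc k) \<Longrightarrow> filterlim a sequentially sequentially"
  unfolding filterlim_at_top eventually_sequentially
  by (metis Suc_leD le_trans)

lemma DCT_seq:
  assumes "\<alpha> > 1" "\<And>k. a k \<ge> Suc k" "\<And>k. b k \<ge> Suc k"
  shows "(\<lambda>k. LINT t|lborel. Pm \<alpha> (a k) t * Pc \<alpha> (b k) t) \<longlonglongrightarrow> (LINT t|lborel. complex_of_real (Rf \<alpha> t))"
    "integrable lborel (\<lambda>t. complex_of_real (Rf \<alpha> t))"
proof -
  have a0: "\<alpha> > 0" using assms by simp
  have ab: "filterlim (\<lambda>k. (a k, b k)) (sequentially \<times>\<^sub>F sequentially) sequentially"
    by (intro filterlim_Pair seq_lim assms)
  have lim: "AE t in lborel. (\<lambda>k. Pm \<alpha> (a k) t * Pc \<alpha> (b k) t) \<longlonglongrightarrow> complex_of_real (Rf \<alpha> t)"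
    using filterlim_compose[OF GG_lim[OF assms(1)] ab] by simp
  have bd: "AE t in lborel. norm (Pm \<alpha> (a k) t * Pc \<alpha> (b k) t) \<le> 1 / (1 + t\<^sup>2)" for k
    using GG_bound[OF a0, of "a k" "b k"] assms(2,3)[of k] by auto
  have m: "(\<lambda>t. complex_of_real (Rf \<alpha> t)) \<in> borel_measurable lborel"
    using Rf_meas[OF assms(1)] by measurable
  show "(\<lambda>k. LINT t|lborel. Pm \<alpha> (a k) t * Pc \<alpha> (b k) t) \<longlonglongrightarrow> (LINT t|lborel. complex_of_real (Rf \<alpha> t))"
    by (rule integral_dominated_convergence[OF m _ inv1sq(1) lim bd]) measurable
  show "integrable lborel (\<lambda>t. complex_of_real (Rf \<alpha> t))"
    by (rule integrable_dominated_convergence[OF m _ inv1sq(1) lim bd]) measurable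
qed

lemma prod_seq_tendsto:
  fixes X :: "nat \<Rightarrow> nat \<Rightarrow> real"
  assumes "\<And>a b. (\<And>k. a k \<ge> Suc k) \<Longrightarrow> (\<And>k. b k \<ge> Suc k) \<Longrightarrow> (\<lambda>k. X (a k) (b k)) \<longlonglongrightarrow> L"
  shows "\<forall>e>0. \<exists>N. \<forall>m\<ge>N. \<forall>n\<ge>N. \<bar>X m n - L\<bar> < e"
proof (rule ccontr)
  assume "\<not> ?thesis"
  then obtain e where e: "e > 0" "\<forall>N. \<exists>m\<ge>N. \<exists>n\<ge>N. \<bar>X m n - L\<bar> \<ge> e"
    by (auto simp: not_less)
  then have "\<forall>N. \<exists>p. fst p \<ge> Suc N \<and> snd p \<ge> Suc N \<and> \<bar>X (fst p) (snd p) - L\<bar> \<ge> e"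
    by (metis fst_conv snd_conv)
  then obtain P where P: "\<And>N. fst (P N) \<ge> Suc N \<and> snd (P N) \<ge> Suc N \<and> \<bar>X (fst (P N)) (snd (P N)) - L\<bar> \<ge> e"
    by metis
  have "(\<lambda>k. X (fst (P k)) (snd (P k))) \<longlonglongrightarrow> L" by (rule assms) (use P in auto)
  then have "eventually (\<lambda>k. dist (X (fst (P k)) (snd (P k))) L < e) sequentially"
    using e(1) by (rule tendstoD)
  then obtain k where "dist (X (fst (P k)) (snd (P k))) L < e" by (auto simp: eventually_sequentially)
  then show False using P[of k] by (simp add: dist_real_def)
qed

lemma Rf_pos:
  assumes "\<alpha> > 1" shows "Rf \<alpha> t > 0"
proof -
  have gpos: "gk \<alpha> t k > 0" for k unfolding gk_def by (auto intro!: divide_pos_pos add_pos_nonneg)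
  have "Rf \<alpha> t \<noteq> 0" unfolding Rf_def
    by (rule prodinf_nonzero[OF gk_convprod[OF assms]]) (use gpos in \<open>simp add: less_imp_neq[symmetric]\<close>)
  moreover have "Rf \<alpha> t \<ge> 0"
  proof (rule tendsto_lowerbound[OF gk_conv[OF assms]])
    have "\<forall>i. 0 \<le> prod (gk \<alpha> t) {..<i}" using gpos by (simp add: prod_nonneg less_imp_le)
    then show "\<forall>\<^sub>F i in sequentially. 0 \<le> prod (gk \<alpha> t) {..<i}" by (auto intro: always_eventually)
  qed simp
  ultimately show ?thesis by simp
qed

definition II :: "real \<Rightarrow> real" where "II \<alpha> = (LINT t|lborel. Rf \<alpha> t)"

lemma Rf_int: "\<alpha> > 1 \<Longrightarrow> integrable lborel (Rf \<alpha>)"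
proof -
  assume a: "\<alpha> > 1"
  have "integrable lborel (\<lambda>t. complex_of_real (Rf \<alpha> t))"
    by (rule DCT_seq(2)[OF a, of "\<lambda>k. Suc k" "\<lambda>k. Suc k"]) auto
  then show ?thesis by (simp add: complex_of_real_integrable_eq)
qed

lemma II_pos: "\<alpha> > 1 \<Longrightarrow> II \<alpha> > 0"
proof -
  assume a: "\<alpha> > 1"
  have nn: "AE t in lborel. 0 \<le> Rf \<alpha> t" using Rf_pos[OF a] less_imp_le by auto
  have "II \<alpha> \<ge> 0" unfolding II_def by (rule integral_nonneg_AE[OF nn])
  moreover have "II \<alpha> \<noteq> 0"
  proof
    assume "II \<alpha> = 0"
    then have "AE t in lborel. Rf \<alpha> t = 0"
      using integral_nonneg_eq_0_iff_AE[OF Rf_int[OF a] nn] unfolding II_def by simp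
    moreover have "\<forall>t. Rf \<alpha> t \<noteq> 0" using Rf_pos[OF a] by (metis less_irrefl)
    ultimately have "AE t in (lborel :: real measure). False" by (auto elim: AE_mp)
    then have "emeasure (lborel :: real measure) {x \<in> space lborel. \<not> False} = 0" by (rule AE_E2)
    then show False by simp
  qed
  ultimately show ?thesis by simp
qed

definition JJ :: "real \<Rightarrow> nat \<Rightarrow> nat \<Rightarrow> real" where
  "JJ \<alpha> m n = Re (LINT t|lborel. Pm \<alpha> m t * Pc \<alpha> n t)"

lemma JJ_lim:
  assumes "\<alpha> > 1"
  shows "\<forall>e>0. \<exists>N. \<forall>m\<ge>N. \<forall>n\<ge>N. \<bar>JJ \<alpha> m n - II \<alpha>\<bar> < e"
proof (rule prod_seq_tendsto)
  fix a b :: "nat \<Rightarrow> nat" assume ab: "\<And>k. a k \<ge> Suc k" "\<And>k. b k \<ge> Suc k"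
  have "(\<lambda>k. Re (LINT t|lborel. Pm \<alpha> (a k) t * Pc \<alpha> (b k) t)) \<longlonglongrightarrow> Re (LINT t|lborel. complex_of_real (Rf \<alpha> t))"
    by (intro tendsto_Re DCT_seq(1)[OF assms] ab)
  then show "(\<lambda>k. JJ \<alpha> (a k) (b k)) \<longlonglongrightarrow> II \<alpha>" unfolding JJ_def II_def by simp
qed

lemma GG_int:
  assumes "\<alpha> > 0" "m \<ge> 1" "n \<ge> 1"
  shows "integrable lborel (\<lambda>t. Pm \<alpha> m t * Pc \<alpha> n t)"
proof (rule Bochner_Integration.integrable_bound[OF inv1sq(1)])
  show "AE x in lborel. norm (Pm \<alpha> m x * Pc \<alpha> n x) \<le> norm (1 / (1 + x\<^sup>2))"
    using GG_bound[OF assms] by (auto simp: add_pos_nonneg)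
qed measurable

lemma HH_split:
  assumes "\<alpha> > 0"
  shows "HH \<alpha> u v t = Pm \<alpha> (Suc u) t * Pc \<alpha> v t * complex_of_real (1 / cc \<alpha> u) + Pm \<alpha> u t * Pc \<alpha> (Suc v) t * complex_of_real (1 / cc \<alpha> v)"
proof -
  have nz: "complex_of_real (cc \<alpha> u) \<noteq> 0" "complex_of_real (cc \<alpha> v) \<noteq> 0"
    using cc_ge1[OF assms, of u] cc_ge1[OF assms, of v] by auto
  show ?thesis unfolding HH_def Pm_Suc Pc_Suc using nz
    by (simp add: field_simps)
qed

lemma QQ_JJ:
  assumes "\<alpha> > 1" "u \<ge> 1" "v \<ge> 1"
  shows "QQ \<alpha> u v = 1 / (2 * pi) * (JJ \<alpha> (Suc u) v * (1 / cc \<alpha> u) + JJ \<alpha> u (Suc v) * (1 / cc \<alpha> v))"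
proof -
  have a0: "\<alpha> > 0" using assms by simp
  have i1: "integrable lborel (\<lambda>t. Pm \<alpha> (Suc u) t * Pc \<alpha> v t)" by (rule GG_int) (use a0 assms in auto)
  have i2: "integrable lborel (\<lambda>t. Pm \<alpha> u t * Pc \<alpha> (Suc v) t)" by (rule GG_int) (use a0 assms in auto)
  have "(LINT t|lborel. HH \<alpha> u v t) = (LINT t|lborel. Pm \<alpha> (Suc u) t * Pc \<alpha> v t) * complex_of_real (1 / cc \<alpha> u)
     + (LINT t|lborel. Pm \<alpha> u t * Pc \<alpha> (Suc v) t) * complex_of_real (1 / cc \<alpha> v)"
    unfolding HH_split[OF a0] using i1 i2 by simp
  then have "complex_of_real (QQ \<alpha> u v) = complex_of_real (1 / (2 * pi)) *
     ((LINT t|lborel. Pm \<alpha> (Suc u) t * Pc \<alpha> v t) * complex_of_real (1 / cc \<alpha> u)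
     + (LINT t|lborel. Pm \<alpha> u t * Pc \<alpha> (Suc v) t) * complex_of_real (1 / cc \<alpha> v))"
    using QQ_formula[OF a0, of u v] by simp
  then have "Re (complex_of_real (QQ \<alpha> u v)) = Re (complex_of_real (1 / (2 * pi)) *
     ((LINT t|lborel. Pm \<alpha> (Suc u) t * Pc \<alpha> v t) * complex_of_real (1 / cc \<alpha> u)
     + (LINT t|lborel. Pm \<alpha> u t * Pc \<alpha> (Suc v) t) * complex_of_real (1 / cc \<alpha> v)))" by simp
  then show ?thesis unfolding JJ_def by simp
qed



lemma beta_eq: "bingo_beta \<alpha> = 1 / (2 * pi) * II \<alpha>"
  unfolding bingo_beta_def II_def Rf_def gk_def by simp

lemma bingo_form:
  assumes "\<alpha> > 1" "i \<ge> 2" "j \<ge> 2"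
  shows "bingo_prob \<alpha> i j = 1 / (2 * pi) * (JJ \<alpha> i (j - 1) * real i powr (-\<alpha>) + JJ \<alpha> (i - 1) j * real j powr (-\<alpha>))"
proof -
  obtain u v where uv: "i = Suc u" "j = Suc v" "u \<ge> 1" "v \<ge> 1"
    using assms by (metis Suc_le_D Suc_le_mono numeral_2_eq_2 One_nat_def)
  show ?thesis unfolding uv(1,2) bingo_QQ QQ_JJ[OF assms(1) uv(3,4)] cc_inv by simp
qed

lemma ratio_bound:
  fixes I x y c J1 J2 d :: real
  assumes "I > 0" "x > 0" "y > 0" "c > 0" "\<bar>J1 - I\<bar> < d" "\<bar>J2 - I\<bar> < d"
  shows "\<bar>(c * (J1 * x + J2 * y)) / ((c * I) * (x + y)) - 1\<bar> < d / I"
proof -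
  have pos: "I * (x + y) > 0" using assms by simp
  have eq: "(c * (J1 * x + J2 * y)) / ((c * I) * (x + y)) - 1 = ((J1 - I) * x + (J2 - I) * y) / (I * (x + y))"
  proof -
    have "(c * (J1 * x + J2 * y)) / ((c * I) * (x + y)) = (J1 * x + J2 * y) / (I * (x + y))"
      using assms by (simp add: mult.assoc)
    also have "\<dots> - 1 = ((J1 * x + J2 * y) - I * (x + y)) / (I * (x + y))"
      using pos assms by (simp add: diff_divide_distrib)
    also have "(J1 * x + J2 * y) - I * (x + y) = (J1 - I) * x + (J2 - I) * y" by (simp add: algebra_simps)
    finally show ?thesis .
  qed
  have "\<bar>(J1 - I) * x + (J2 - I) * y\<bar> \<le> \<bar>J1 - I\<bar> * x + \<bar>J2 - I\<bar> * y"
    using assms abs_triangle_ineq[of "(J1 - I) * x" "(J2 - I) * y"] by (simp add: abs_mult)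
  also have "\<dots> < d * x + d * y"
    using assms by (intro add_strict_mono mult_strict_right_mono) auto
  finally have num: "\<bar>(J1 - I) * x + (J2 - I) * y\<bar> < d * (x + y)" by (simp add: algebra_simps)
  have "\<bar>((J1 - I) * x + (J2 - I) * y) / (I * (x + y))\<bar> = \<bar>(J1 - I) * x + (J2 - I) * y\<bar> / (I * (x + y))"
    using pos by (simp add: abs_divide)
  also have "\<dots> < d * (x + y) / (I * (x + y))" using num pos by (intro divide_strict_right_mono) auto
  also have "\<dots> = d / I" using assms by simp
  finally show ?thesis unfolding eq .
qed

lemma main_ratio:
  assumes "\<alpha> > 1"
  shows "((\<lambda>p. bingo_prob \<alpha> (fst p) (snd p) / (bingo_beta \<alpha> * (real (fst p) powr (-\<alpha>) + real (snd p) powr (-\<alpha>)))) \<longlongrightarrow> 1)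
     (sequentially \<times>\<^sub>F sequentially)"
proof (rule tendstoI)
  fix e :: real assume e: "e > 0"
  have I: "II \<alpha> > 0" by (rule II_pos[OF assms])
  define d where "d = e * II \<alpha> / 2"
  have d: "d > 0" unfolding d_def using e I by simp
  obtain N0 where N0: "\<And>m n. m \<ge> N0 \<Longrightarrow> n \<ge> N0 \<Longrightarrow> \<bar>JJ \<alpha> m n - II \<alpha>\<bar> < d"
    using JJ_lim[OF assms] d by blast
  show "\<forall>\<^sub>F p in sequentially \<times>\<^sub>F sequentially.
     dist (bingo_prob \<alpha> (fst p) (snd p) / (bingo_beta \<alpha> * (real (fst p) powr (-\<alpha>) + real (snd p) powr (-\<alpha>)))) 1 < e"
    unfolding eventually_prod_sequentially
  proof (intro exI allI impI)
    fix m n assume m: "N0 + 2 \<le> m" and n: "N0 + 2 \<le> n"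
    have b: "bingo_prob \<alpha> m n = 1 / (2 * pi) * (JJ \<alpha> m (n - 1) * real m powr (-\<alpha>) + JJ \<alpha> (m - 1) n * real n powr (-\<alpha>))"
      by (rule bingo_form[OF assms]) (use m n in auto)
    have "\<bar>bingo_prob \<alpha> m n / (bingo_beta \<alpha> * (real m powr (-\<alpha>) + real n powr (-\<alpha>))) - 1\<bar> < d / II \<alpha>"
      unfolding b beta_eq
      by (rule ratio_bound) (use I m n in \<open>auto intro!: N0\<close>)
    also have "d / II \<alpha> < e" unfolding d_def using I e by simp
    finally show "dist (bingo_prob \<alpha> (fst (m, n)) (snd (m, n)) / (bingo_beta \<alpha> * (real (fst (m, n)) powr (-\<alpha>) + real (snd (m, n)) powr (-\<alpha>)))) 1 < e"
      by (simp add: dist_real_def)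
  qed
qed

theorem theoremt3:
  fixes \<alpha> :: real
  assumes "\<alpha> > 1"
  shows "0 < bingo_beta \<alpha>
    \<and> (\<lambda>(i, j). bingo_prob \<alpha> i j) \<sim>[sequentially \<times>\<^sub>F sequentially]
        (\<lambda>(i, j). bingo_beta \<alpha> * (real i powr (-\<alpha>) + real j powr (-\<alpha>)))
    \<and> (\<lambda>n. bingo_prob \<alpha> n n) \<sim>[sequentially] (\<lambda>n. 2 * bingo_beta \<alpha> * real n powr (-\<alpha>))"
proof (intro conjI)
  show "0 < bingo_beta \<alpha>" unfolding beta_eq using II_pos[OF assms] by simp
  have eq: "(\<lambda>x. (case x of (i, j) \<Rightarrow> bingo_prob \<alpha> i j) / (case x of (i, j) \<Rightarrow> bingo_beta \<alpha> * (real i powr (-\<alpha>) + real j powr (-\<alpha>))))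
     = (\<lambda>p. bingo_prob \<alpha> (fst p) (snd p) / (bingo_beta \<alpha> * (real (fst p) powr (-\<alpha>) + real (snd p) powr (-\<alpha>))))"
    by (rule ext) (simp add: case_prod_beta)
  show P: "(\<lambda>(i, j). bingo_prob \<alpha> i j) \<sim>[sequentially \<times>\<^sub>F sequentially]
        (\<lambda>(i, j). bingo_beta \<alpha> * (real i powr (-\<alpha>) + real j powr (-\<alpha>)))"
    by (rule asymp_equivI') (unfold eq, rule main_ratio[OF assms])
  have "(\<lambda>n. (\<lambda>(i, j). bingo_prob \<alpha> i j) (n, n)) \<sim>[sequentially] (\<lambda>n. (\<lambda>(i, j). bingo_beta \<alpha> * (real i powr (-\<alpha>) + real j powr (-\<alpha>))) (n, n))"
    by (rule asymp_equiv_compose'[OF P filterlim_Pair[OF filterlim_ident filterlim_ident]])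
  moreover have "(\<lambda>n. (\<lambda>(i, j). bingo_beta \<alpha> * (real i powr (-\<alpha>) + real j powr (-\<alpha>))) (n, n)) = (\<lambda>n. 2 * bingo_beta \<alpha> * real n powr (-\<alpha>))"
    by (rule ext) (simp add: algebra_simps)
  ultimately show "(\<lambda>n. bingo_prob \<alpha> n n) \<sim>[sequentially] (\<lambda>n. 2 * bingo_beta \<alpha> * real n powr (-\<alpha>))"
    by simp
qed


end
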